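(* Fix $\vartheta>0$ and let $I_n^{(\vartheta)}$ be the internal path length of a Hoppe tree with parameter $\vartheta$ and $n$ nodes. Then, as $n\to\infty$, \begin{align*} \mathbb{E}[I_n^{(\vartheta)}]&= (\vartheta+n-1)\sum_{i=1}^{n-1} \frac{1}{\vartheta+i} = n \log n -\Psi(\vartheta+1) n + o(n),\\ \mathrm{Var}(I_n^{(\vartheta)}) &= \left( \frac{2}{\vartheta+1} - \Psi_1(\vartheta+1)\right) n^2 + o(n^2). \end{align*} Moreover, $$\left( \frac{I_n^{(\vartheta)}-\mathbb{E}[I_n^{(\vartheta)}]}{\vartheta+n-1} \right)_{n\geq 1}$$ is a zero-mean martingale.
   Context: Hoppe tree with parameter $\vartheta>0$: the tree is grown by successive insertion of nodes, labelled $1,2,\ldots$ in order of insertion, all on one probability space (so the trees with $n=1,2,\ldots$ nodes form a growing sequence). Initially there is only the root. In each step a parent node is chosen among the existing nodes, independently of the past, with probability proportional to its weight, where the root has weight $\vartheta$ and every other node has weight $1$; a new node is attached as a child of the chosen node. The depth $D_i^{(\vartheta)}$ of node $i$ is its distance to the root, and the internal path length of the tree with $n$ nodes is $I_n^{(\vartheta)}=\sum_{i=1}^n D_i^{(\vartheta)}$. $\Psi=\frac{d}{dx}\log\Gamma$ is the digamma function and $\Psi_1=\frac{d^2}{dx^2}\log\Gamma$ the trigamma function. *)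

theory Defs
  imports "HOL-Probability.Probability" "HOL-Library.Landau_Symbols"
begin

text \<open>Hoppe tree encoding: node 1 is the root; for i \<ge> 2 the value p i is the
  parent of node i (a node in 1..i-1). Depth of a node given the parent map.\<close>

function hoppe_depth :: "(nat \<Rightarrow> nat) \<Rightarrow> nat \<Rightarrow> nat" where
  "hoppe_depth p i =
     (if i \<le> 1 then 0
      else if 1 \<le> p i \<and> p i < i then Suc (hoppe_depth p (p i)) else 0)"
  by auto
termination by (relation "Wellfounded.measure snd") auto

text \<open>Probability that node i (i \<ge> 2) picks parent j: the root (node 1) has weight
  theta, each of the other existing nodes 2..i-1 has weight 1; total weight theta + i - 2.\<close>

definition hoppe_parent_prob :: "real \<Rightarrow> nat \<Rightarrow> nat \<Rightarrow> real" where
  "hoppe_parent_prob theta i j =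
     (if j = 1 then theta else if 2 \<le> j \<and> j < i then 1 else 0) / (theta + real i - 2)"

definition hoppe_ipl :: "(nat \<Rightarrow> nat) \<Rightarrow> nat \<Rightarrow> nat" where
  "hoppe_ipl p n = (\<Sum>i=1..n. hoppe_depth p i)"

text \<open>Natural filtration of the growing tree: the tree with n nodes is determined by
  the parent choices of nodes 2..n.\<close>

definition hoppe_filtration :: "'a measure \<Rightarrow> (nat \<Rightarrow> 'a \<Rightarrow> nat) \<Rightarrow> nat \<Rightarrow> 'a measure" where
  "hoppe_filtration M P n =
     sigma (space M) {P i -` A \<inter> space M | i A. 2 \<le> i \<and> i \<le> n}"

definition real_martingale_from ::
  "nat \<Rightarrow> 'a measure \<Rightarrow> (nat \<Rightarrow> 'a measure) \<Rightarrow> (nat \<Rightarrow> 'a \<Rightarrow> real) \<Rightarrow> bool" where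
  "real_martingale_from k M F X \<longleftrightarrow>
     (\<forall>n\<ge>k. subalgebra M (F n)) \<and>
     (\<forall>n m. k \<le> n \<and> n \<le> m \<longrightarrow> sets (F n) \<subseteq> sets (F m)) \<and>
     (\<forall>n\<ge>k. X n \<in> borel_measurable (F n)) \<and>
     (\<forall>n\<ge>k. integrable M (X n)) \<and>
     (\<forall>n\<ge>k. AE x in M. real_cond_exp M (F n) (X (Suc n)) x = X n x)"

end

theory Submission imports Defs "HOL-Real_Asymp.Real_Asymp" begin


definition hH :: "real \<Rightarrow> nat \<Rightarrow> real" where "hH t n = (\<Sum>i\<in>{1..<n}. 1/(t + real i))"
definition hG :: "real \<Rightarrow> nat \<Rightarrow> real" where "hG t n = (\<Sum>i\<in>{1..<n}. 1/(t + real i)^2)"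
definition hR :: "real \<Rightarrow> nat \<Rightarrow> real" where "hR t n = (\<Sum>k\<in>{1..<n}. (1 + 2*hH t k)/(t + real k))"
definition hT :: "real \<Rightarrow> nat \<Rightarrow> real" where
  "hT t n = (\<Sum>k\<in>{1..<n}. (hH t k - hG t k)/((t + real k)*(t + real k + 1)))"

lemma hH_0[simp]: "hH t 0 = 0" and hH_1[simp]: "hH t 1 = 0" by (simp_all add: hH_def)
lemma hG_0[simp]: "hG t 0 = 0" and hG_1[simp]: "hG t 1 = 0" by (simp_all add: hG_def)
lemma hR_0[simp]: "hR t 0 = 0" and hR_1[simp]: "hR t 1 = 0" by (simp_all add: hR_def)
lemma hT_0[simp]: "hT t 0 = 0" and hT_1[simp]: "hT t 1 = 0" by (simp_all add: hT_def)

lemma hX_Suc0[simp]: "hH t (Suc 0) = 0" "hG t (Suc 0) = 0" "hR t (Suc 0) = 0" "hT t (Suc 0) = 0"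
  by (simp_all add: hH_def hG_def hR_def hT_def)

lemma hH_Suc: "n \<ge> 1 \<Longrightarrow> hH t (Suc n) = hH t n + 1/(t + real n)"
  by (simp add: hH_def)
lemma hG_Suc: "n \<ge> 1 \<Longrightarrow> hG t (Suc n) = hG t n + 1/(t + real n)^2"
  by (simp add: hG_def)
lemma hR_Suc: "n \<ge> 1 \<Longrightarrow> hR t (Suc n) = hR t n + (1 + 2*hH t n)/(t + real n)"
  by (simp add: hR_def)
lemma hT_Suc: "n \<ge> 1 \<Longrightarrow> hT t (Suc n) = hT t n + (hH t n - hG t n)/((t + real n)*(t + real n + 1))"
  by (simp add: hT_def)

lemma hR_eq: "t > 0 \<Longrightarrow> hR t n - (hH t n)^2 = hH t n - hG t n"
proof (induction n)
  case (Suc n)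
  show ?case
  proof (cases "n = 0")
    case False
    hence n: "n \<ge> 1" by simp
    have IH: "hR t n = hH t n ^2 + hH t n - hG t n" using Suc.IH[OF Suc.prems] by simp
    define x where "x = 1/(t + real n)"
    have "(1 + 2*hH t n)/(t + real n) = (1 + 2*hH t n) * x" "1/(t + real n)^2 = x^2"
      by (simp_all add: x_def power2_eq_square)
    thus ?thesis using n unfolding hH_Suc[OF n] hG_Suc[OF n] hR_Suc[OF n] IH x_def[symmetric]
      by (simp add: power2_eq_square algebra_simps)
  qed (simp add: hH_def hG_def hR_def)
qed simp

lemma hT_parts: "t > 0 \<Longrightarrow> hT t (Suc N) = (\<Sum>m\<in>{1..<Suc N}. (1/(t+real m) - 1/(t+real m)^2)/(t+real m+1))
    - (hH t (Suc N) - hG t (Suc N))/(t + real N + 1)"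
proof (induction N)
  case (Suc N)
  have p: "t + real N + 1 > 0" "t + real N + 2 > 0" using Suc.prems by auto
  have e: "hT t (Suc (Suc N)) = hT t (Suc N) + (hH t (Suc N) - hG t (Suc N))/((t + real N + 1)*(t + real N + 2))"
    by (subst hT_Suc) (auto simp: add_ac)
  define a where "a = t + real N + 1"
  define f where "f = hH t (Suc N) - hG t (Suc N)"
  define S where "S = (\<Sum>m\<in>{1..<Suc N}. (1/(t+real m) - 1/(t+real m)^2)/(t+real m+1))"
  have a: "a > 0" using p by (simp add: a_def)
  have f2: "hH t (Suc (Suc N)) - hG t (Suc N) - 1/a^2 = f + 1/a - 1/a^2"
    by (simp add: hH_Suc[of "Suc N"] f_def a_def add_ac)
  have S2: "(\<Sum>m\<in>{1..<Suc (Suc N)}. (1/(t+real m) - 1/(t+real m)^2)/(t+real m+1)) = S + (1/a - 1/a^2)/(a+1)"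
    by (simp add: S_def a_def add_ac)
  have aa: "a + a*a \<noteq> 0" "a \<noteq> 0" "a + 1 \<noteq> 0" using a by (simp_all add: add_pos_pos, smt (verit) mult_pos_pos)
  have key: "- f/a + f/(a*(a+1)) = - f/(a+1)" using aa by (simp add: divide_simps) (simp add: algebra_simps)
  have e2: "hT t (Suc (Suc N)) = S - f/a + f/(a*(a+1))"
    unfolding e Suc.IH[OF Suc.prems] S_def[symmetric] f_def[symmetric] by (simp add: a_def add_ac)
  have f3: "hH t (Suc (Suc N)) - hG t (Suc (Suc N)) = f + 1/a - 1/a^2"
    by (simp add: hH_Suc[of "Suc N"] hG_Suc[of "Suc N"] f_def a_def add_ac)
  have den: "t + real (Suc N) + 1 = a + 1" by (simp add: a_def)
  have k2: "(1/a - 1/a^2)/(a+1) - (f + 1/a - 1/a^2)/(a+1) = - f/(a+1)"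
    by (simp add: diff_divide_distrib add_divide_distrib)
  show ?case unfolding e2 S2 f3 den using key k2 by linarith
qed (simp add: hT_def hH_def hG_def)

lemma hH_shift: "hH t (Suc m) = (\<Sum>k<m. inverse (t + 1 + real k))"
  by (induction m) (auto simp: hH_Suc add_ac divide_inverse hH_def)
lemma hG_shift: "hG t (Suc m) = (\<Sum>k<m. inverse ((t + 1 + real k)^2))"
  by (induction m) (auto simp: hG_Suc add_ac divide_inverse hG_def)

lemma hH_lim: "t > 0 \<Longrightarrow> (\<lambda>m. hH t (Suc m) - ln (real m)) \<longlonglongrightarrow> - Digamma (t+1)"
proof -
  assume t: "t > 0"
  have "(\<lambda>m. of_real (ln (real m)) - (\<Sum>n<m. inverse ((t+1) + of_nat n))) \<longlonglongrightarrow> Digamma (t+1)"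
    by (rule Digamma_LIMSEQ) (use t in simp)
  hence "(\<lambda>m. - (ln (real m) - (\<Sum>n<m. inverse ((t+1) + real n)))) \<longlonglongrightarrow> - Digamma (t+1)"
    by (intro tendsto_minus) simp
  thus ?thesis by (simp add: hH_shift)
qed

lemma hG_lim: "t > 0 \<Longrightarrow> (\<lambda>m. hG t (Suc m)) \<longlonglongrightarrow> Polygamma 1 (t+1)"
proof -
  assume t: "t > 0"
  have "(\<lambda>k. inverse (((t+1) + of_nat k)^Suc 1)) sums ((-1) ^ Suc 1 * Polygamma 1 (t+1) / fact 1)"
    by (rule Polygamma_LIMSEQ) (use t in simp_all)
  hence "(\<lambda>k. inverse ((t+1 + real k)^2)) sums (Polygamma 1 (t+1))" by (simp add: numeral_2_eq_2)
  thus ?thesis by (simp add: sums_def hG_shift)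
qed

lemma asym1:
  assumes t: "t > 0"
  shows "(\<lambda>n. (t + real n - 1) * hH t n - (real n * ln (real n) - Digamma (t+1) * real n)) \<in> o(\<lambda>n. real n)"
proof -
  define D where "D = Digamma (t+1)"
  define u where "u n = hH t n - ln (real n) + D" for n
  have l0: "(\<lambda>m. ln (real m) - ln (real (Suc m))) \<longlonglongrightarrow> 0" by real_asymp
  have "(\<lambda>m. (hH t (Suc m) - ln (real m) + D) + (ln (real m) - ln (real (Suc m)))) \<longlonglongrightarrow> (- D + D) + 0"
    by (intro tendsto_add hH_lim[OF t, folded D_def] tendsto_const l0)
  hence "(\<lambda>m. u (Suc m)) \<longlonglongrightarrow> 0" by (simp add: u_def algebra_simps)
  hence u0: "u \<longlonglongrightarrow> 0" by (rule filterlim_sequentially_Suc[THEN iffD1])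
  have l1: "(\<lambda>n. ln (real n)/real n) \<longlonglongrightarrow> 0" by real_asymp
  have l2: "(\<lambda>n. 1/real n) \<longlonglongrightarrow> 0" by real_asymp
  have l3: "(\<lambda>n. (t + real n - 1)/real n) \<longlonglongrightarrow> 1" by real_asymp
  have "(\<lambda>n. (t-1)*(ln (real n)/real n) - (t-1)*D*(1/real n) + ((t + real n - 1)/real n) * u n)
     \<longlonglongrightarrow> (t-1)*0 - (t-1)*D*0 + 1*0"
    by (intro tendsto_add tendsto_diff tendsto_mult tendsto_const l1 l2 l3 u0)
  hence lim: "(\<lambda>n. (t-1)*(ln (real n)/real n) - (t-1)*D*(1/real n) + ((t + real n - 1)/real n) * u n) \<longlonglongrightarrow> 0"
    by simp
  show ?thesis
  proof (rule smalloI_tendsto)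
    show "\<forall>\<^sub>F n in sequentially. real n \<noteq> 0"
      using eventually_gt_at_top[of "0::nat"] by eventually_elim simp
    show "((\<lambda>n. ((t + real n - 1) * hH t n - (real n * ln (real n) - Digamma (t+1) * real n)) / real n) \<longlongrightarrow> 0) sequentially"
    proof (rule Lim_transform_eventually[OF lim])
      show "\<forall>\<^sub>F n in sequentially. (t-1)*(ln (real n)/real n) - (t-1)*D*(1/real n) + ((t + real n - 1)/real n) * u n
         = ((t + real n - 1) * hH t n - (real n * ln (real n) - Digamma (t+1) * real n)) / real n"
        using eventually_gt_at_top[of "0::nat"] by eventually_elim (simp add: u_def D_def field_simps)
    qed
  qed
qed

lemma sum_shift1: "(\<Sum>m\<in>{1..<Suc N}. h m) = (\<Sum>k<N. h (Suc k))"
  by (induction N) auto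

lemma hT_lim:
  assumes t: "t > 0"
  shows "hT t \<longlonglongrightarrow> 2/(t+1) - Polygamma 1 (t+1)"
proof -
  define L where "L = 2/(t+1) - Polygamma 1 (t+1)"
  define g where "g k = (1/(t+real (Suc k)) - 1/(t+real (Suc k))^2)/(t+real (Suc k)+1)" for k
  have f0: "(\<lambda>k. 1/(t+1+real k)) \<longlonglongrightarrow> 0" by real_asymp
  have s1: "(\<lambda>k. 1/(t+1+real k) - 1/(t+1+real (Suc k))) sums (1/(t+1+real 0) - 0)"
    by (rule telescope_sums'[OF f0])
  have "(\<lambda>k. inverse (((t+1) + of_nat k)^Suc 1)) sums ((-1) ^ Suc 1 * Polygamma 1 (t+1) / fact 1)"
    by (rule Polygamma_LIMSEQ) (use t in simp_all)
  hence s2: "(\<lambda>k. inverse ((t+1 + real k)^2)) sums (Polygamma 1 (t+1))" by (simp add: numeral_2_eq_2)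
  have "(\<lambda>k. 2 * (1/(t+1+real k) - 1/(t+1+real (Suc k))) - inverse ((t+1 + real k)^2)) sums (2 * (1/(t+1+real 0) - 0) - Polygamma 1 (t+1))"
    by (intro sums_diff sums_mult s1 s2)
  moreover have "(\<lambda>k. 2 * (1/(t+1+real k) - 1/(t+1+real (Suc k))) - inverse ((t+1 + real k)^2)) = g"
  proof
    fix k
    define a where "a = t + 1 + real k"
    have a: "a > 0" using t by (simp add: a_def)
    have nz: "a \<noteq> 0" "a + 1 \<noteq> 0" "a*a \<noteq> 0" "a*a*(a+1) \<noteq> 0" using a by auto
    have "2 * (1/a - 1/(a+1)) - inverse (a^2) = (a - 1)/(a*a*(a+1))"
      using nz by (simp add: divide_simps power2_eq_square)
    also have "\<dots> = (1/a - 1/a^2)/(a+1)"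
      using nz by (simp add: divide_simps power2_eq_square)
    finally have "2 * (1/a - 1/(a+1)) - inverse (a^2) = (1/a - 1/a^2)/(a+1)" .
    thus "2 * (1/(t+1+real k) - 1/(t+1+real (Suc k))) - inverse ((t+1 + real k)^2) = g k"
      by (simp add: g_def a_def add_ac)
  qed
  ultimately have "g sums L" by (simp add: L_def)
  hence A: "(\<lambda>N. \<Sum>k<N. g k) \<longlonglongrightarrow> L" by (simp add: sums_def)
  have l1: "(\<lambda>N. 1/(t + real N + 1)) \<longlonglongrightarrow> 0" by real_asymp
  have l2: "(\<lambda>N. ln (real N)/(t + real N + 1)) \<longlonglongrightarrow> 0" by real_asymp
  have "(\<lambda>N. (\<Sum>k<N. g k) - ((hH t (Suc N) - ln (real N)) * (1/(t + real N + 1)) + ln (real N)/(t + real N + 1)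
      - hG t (Suc N) * (1/(t + real N + 1)))) \<longlonglongrightarrow> L - ((- Digamma (t+1)) * 0 + 0 - Polygamma 1 (t+1) * 0)"
    by (intro tendsto_diff tendsto_add tendsto_mult A hH_lim[OF t] hG_lim[OF t] l1 l2)
  moreover have "\<And>N. (\<Sum>k<N. g k) - ((hH t (Suc N) - ln (real N)) * (1/(t + real N + 1)) + ln (real N)/(t + real N + 1)
      - hG t (Suc N) * (1/(t + real N + 1))) = hT t (Suc N)"
  proof -
    fix N
    have c: "t + real N + 1 > 0" using t by simp
    have "(hH t (Suc N) - ln (real N)) * (1/(t + real N + 1)) + ln (real N)/(t + real N + 1)
      - hG t (Suc N) * (1/(t + real N + 1)) = (hH t (Suc N) - hG t (Suc N))/(t + real N + 1)"
      by (simp add: divide_inverse algebra_simps)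
    thus "(\<Sum>k<N. g k) - ((hH t (Suc N) - ln (real N)) * (1/(t + real N + 1)) + ln (real N)/(t + real N + 1)
      - hG t (Suc N) * (1/(t + real N + 1))) = hT t (Suc N)"
      unfolding hT_parts[OF t] sum_shift1 g_def by simp
  qed
  ultimately have "(\<lambda>N. hT t (Suc N)) \<longlonglongrightarrow> L" by simp
  thus ?thesis unfolding L_def by (rule filterlim_sequentially_Suc[THEN iffD1])
qed

lemma asym2:
  assumes t: "t > 0"
  shows "(\<lambda>n. (t + real n - 1) * (t + real n) * hT t n - (2/(t+1) - Polygamma 1 (t+1)) * (real n)^2) \<in> o(\<lambda>n. (real n)^2)"
proof (rule smalloI_tendsto)
  define L where "L = 2/(t+1) - Polygamma 1 (t+1)"
  show "\<forall>\<^sub>F n in sequentially. (real n)^2 \<noteq> 0"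
    using eventually_gt_at_top[of "0::nat"] by eventually_elim simp
  have l3: "(\<lambda>n. (t + real n - 1) * (t + real n) / (real n)^2) \<longlonglongrightarrow> 1" by real_asymp
  have "(\<lambda>n. ((t + real n - 1) * (t + real n) / (real n)^2) * hT t n - L) \<longlonglongrightarrow> 1 * L - L"
    by (intro tendsto_diff tendsto_mult l3 hT_lim[OF t, folded L_def] tendsto_const)
  hence lim: "(\<lambda>n. ((t + real n - 1) * (t + real n) / (real n)^2) * hT t n - L) \<longlonglongrightarrow> 0" by simp
  show "((\<lambda>n. ((t + real n - 1) * (t + real n) * hT t n - (2/(t+1) - Polygamma 1 (t+1)) * (real n)^2) / (real n)^2) \<longlongrightarrow> 0) sequentially"
  proof (rule Lim_transform_eventually[OF lim])
    show "\<forall>\<^sub>F n in sequentially. ((t + real n - 1) * (t + real n) / (real n)^2) * hT t n - L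
       = ((t + real n - 1) * (t + real n) * hT t n - (2/(t+1) - Polygamma 1 (t+1)) * (real n)^2) / (real n)^2"
      using eventually_gt_at_top[of "0::nat"] by eventually_elim (simp add: L_def field_simps)
  qed
qed



declare hoppe_depth.simps[simp del]
declare sum.op_ivl_Suc[simp del]

definition locn :: "nat \<Rightarrow> ((nat \<Rightarrow> nat) \<Rightarrow> 'b) \<Rightarrow> bool" where
  "locn n F \<longleftrightarrow> (\<forall>p p'. (\<forall>k\<in>{2..n}. p k = p' k) \<longrightarrow> F p = F p')"

definition hS :: "nat \<Rightarrow> (nat \<Rightarrow> nat) set" where "hS n = PiE {2..n} (\<lambda>i. {1..<i})"
definition hw :: "real \<Rightarrow> nat \<Rightarrow> (nat \<Rightarrow> nat) \<Rightarrow> real" where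
  "hw t n v = (\<Prod>i\<in>{2..n}. hoppe_parent_prob t i (v i))"
definition hEx :: "real \<Rightarrow> nat \<Rightarrow> ((nat \<Rightarrow> nat) \<Rightarrow> real) \<Rightarrow> real" where
  "hEx t n F = (\<Sum>v\<in>hS n. F v * hw t n v)"
definition dep :: "(nat \<Rightarrow> nat) \<Rightarrow> nat \<Rightarrow> real" where "dep p i = real (hoppe_depth p i)"
definition hipl :: "(nat \<Rightarrow> nat) \<Rightarrow> nat \<Rightarrow> real" where "hipl p n = (\<Sum>i=1..n. dep p i)"
definition sqd :: "(nat \<Rightarrow> nat) \<Rightarrow> nat \<Rightarrow> real" where "sqd p n = (\<Sum>i=1..n. (dep p i)^2)"

lemma depth_local: "(\<forall>k\<in>{2..i}. p k = p' k) \<Longrightarrow> hoppe_depth p i = hoppe_depth p' i"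
proof (induction i rule: less_induct)
  case (less i)
  show ?case
  proof (cases "i \<le> 1")
    case True thus ?thesis by (subst (1 2) hoppe_depth.simps) simp
  next
    case False
    hence pi: "p i = p' i" using less.prems by auto
    show ?thesis
    proof (cases "1 \<le> p i \<and> p i < i")
      case True
      have ag: "\<forall>k\<in>{2..p i}. p k = p' k"
      proof
        fix k assume "k \<in> {2..p i}"
        hence "k \<in> {2..i}" using True by auto
        thus "p k = p' k" using less.prems by blast
      qed
      have "hoppe_depth p (p i) = hoppe_depth p' (p i)"
        using True by (intro less.IH ag) auto
      thus ?thesis using False True pi by (subst (1 2) hoppe_depth.simps) simp
    next
      case F2: False
      thus ?thesis using False pi by (subst (1 2) hoppe_depth.simps) auto
    qed
  qed
qed

lemma depth_le: "hoppe_depth p i \<le> i"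
proof (induction i rule: less_induct)
  case (less i)
  show ?case
  proof (cases "i \<le> 1 \<or> \<not> (1 \<le> p i \<and> p i < i)")
    case True thus ?thesis by (subst hoppe_depth.simps) auto
  next
    case False
    hence "hoppe_depth p (p i) \<le> p i" by (intro less.IH) auto
    thus ?thesis using False by (subst hoppe_depth.simps) auto
  qed
qed

lemma depth_1[simp]: "hoppe_depth p (Suc 0) = 0" by (subst hoppe_depth.simps) simp
lemma dep_1[simp]: "dep p (Suc 0) = 0" by (simp add: dep_def)

lemma dep_upd_below: "j \<le> n \<Longrightarrow> dep (p(Suc n := y)) j = dep p j"
  unfolding dep_def by (rule arg_cong[where f=real], rule depth_local) auto

lemma dep_upd_top: "1 \<le> j \<Longrightarrow> j \<le> n \<Longrightarrow> dep (p(Suc n := j)) (Suc n) = 1 + dep p j"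
proof -
  assume j: "1 \<le> j" "j \<le> n"
  have "hoppe_depth (p(Suc n := j)) (Suc n) = Suc (hoppe_depth (p(Suc n := j)) j)"
    using j by (subst hoppe_depth.simps) auto
  thus ?thesis using dep_upd_below[OF j(2)] by (simp add: dep_def)
qed

lemma locn_dep: "i \<le> n \<Longrightarrow> locn n (\<lambda>p. dep p i)"
  unfolding locn_def dep_def by (auto intro!: arg_cong[where f=real] depth_local)

lemma locn_ipl: "locn n (\<lambda>p. hipl p n)"
  unfolding locn_def hipl_def dep_def by (auto intro!: sum.cong arg_cong[where f=real] depth_local)

lemma locn_sqd: "locn n (\<lambda>p. sqd p n)"
  unfolding locn_def sqd_def dep_def by (auto intro!: sum.cong arg_cong[where f=real] depth_local)

lemma locn_mono: "locn n F \<Longrightarrow> n \<le> m \<Longrightarrow> locn m F"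
  unfolding locn_def by auto

lemma locn_upd: "locn n F \<Longrightarrow> F (p(Suc n := y)) = F p"
  unfolding locn_def by auto

lemma ipl_Suc: "hipl p (Suc n) = hipl p n + dep p (Suc n)" by (simp add: hipl_def)
lemma sqd_Suc: "sqd p (Suc n) = sqd p n + (dep p (Suc n))^2" by (simp add: sqd_def)

lemma ipl_upd: "hipl (p(Suc n := y)) n = hipl p n" by (simp add: hipl_def dep_upd_below)
lemma sqd_upd: "sqd (p(Suc n := y)) n = sqd p n" by (simp add: sqd_def dep_upd_below)

lemma hS_Suc: "n \<ge> 1 \<Longrightarrow> hS (Suc n) = (\<lambda>(y, g). g(Suc n := y)) ` ({1..<Suc n} \<times> hS n)"
proof -
  assume n: "n \<ge> 1"
  have "{2..Suc n} = insert (Suc n) {2..n}" using n by auto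
  thus ?thesis unfolding hS_def by (simp add: PiE_insert_eq)
qed

lemma hw_upd: "n \<ge> 1 \<Longrightarrow> hw t (Suc n) (g(Suc n := y)) = hoppe_parent_prob t (Suc n) y * hw t n g"
proof -
  assume n: "n \<ge> 1"
  have "{2..Suc n} = insert (Suc n) {2..n}" using n by auto
  thus ?thesis unfolding hw_def by (auto simp add: prod.insert intro!: prod.cong)
qed

lemma Ex_Suc: "n \<ge> 1 \<Longrightarrow>
  hEx t (Suc n) F = hEx t n (\<lambda>p. \<Sum>y\<in>{1..<Suc n}. hoppe_parent_prob t (Suc n) y * F (p(Suc n := y)))"
proof -
  assume n: "n \<ge> 1"
  have inj: "inj_on (\<lambda>(y, g). g(Suc n := y)) ({1..<Suc n} \<times> hS n)"
    unfolding hS_def by (rule inj_combinator) simp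
  have "hEx t (Suc n) F = (\<Sum>(y,g)\<in>{1..<Suc n} \<times> hS n. F (g(Suc n := y)) * hw t (Suc n) (g(Suc n := y)))"
    unfolding hEx_def hS_Suc[OF n] by (subst sum.reindex[OF inj]) (simp add: case_prod_unfold)
  also have "\<dots> = (\<Sum>y\<in>{1..<Suc n}. \<Sum>g\<in>hS n. F (g(Suc n := y)) * (hoppe_parent_prob t (Suc n) y * hw t n g))"
    by (simp add: sum.cartesian_product hw_upd[OF n])
  also have "\<dots> = (\<Sum>g\<in>hS n. \<Sum>y\<in>{1..<Suc n}. F (g(Suc n := y)) * (hoppe_parent_prob t (Suc n) y * hw t n g))"
    by (rule sum.swap)
  also have "\<dots> = hEx t n (\<lambda>p. \<Sum>y\<in>{1..<Suc n}. hoppe_parent_prob t (Suc n) y * F (p(Suc n := y)))"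
    unfolding hEx_def sum_distrib_right by (intro sum.cong refl) (simp add: mult_ac sum_distrib_left)
  finally show ?thesis .
qed

lemma q_sum_gen: "t > 0 \<Longrightarrow> n \<ge> 1 \<Longrightarrow>
  (\<Sum>y\<in>{1..<Suc n}. hoppe_parent_prob t (Suc n) y * f y) = (t * f 1 + (\<Sum>y\<in>{2..n}. f y)) / (t + real n - 1)"
proof -
  assume t: "t > 0" and n: "n \<ge> 1"
  have sp: "{1..<Suc n} = insert 1 {2..n}" using n by auto
  have "(\<Sum>y\<in>{1..<Suc n}. hoppe_parent_prob t (Suc n) y * f y)
     = t / (t + real n - 1) * f 1 + (\<Sum>y\<in>{2..n}. 1 / (t + real n - 1) * f y)"
    unfolding sp by (subst sum.insert) (auto simp: hoppe_parent_prob_def intro!: sum.cong)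
  also have "\<dots> = (t * f 1 + (\<Sum>y\<in>{2..n}. f y)) / (t + real n - 1)"
    by (simp add: sum_divide_distrib add_divide_distrib)
  finally show ?thesis .
qed

lemma q_sum: "t > 0 \<Longrightarrow> n \<ge> 1 \<Longrightarrow> (\<Sum>y\<in>{1..<Suc n}. hoppe_parent_prob t (Suc n) y) = 1"
  using q_sum_gen[of t n "\<lambda>_. 1"] by simp

lemma ipl_alt: "n \<ge> 1 \<Longrightarrow> hipl p n = (\<Sum>y\<in>{2..n}. dep p y)"
proof -
  assume n: "n \<ge> 1"
  have "{1..n} = insert 1 {2..n}" using n by auto
  thus ?thesis by (simp add: hipl_def)
qed

lemma sqd_alt: "n \<ge> 1 \<Longrightarrow> sqd p n = (\<Sum>y\<in>{2..n}. (dep p y)^2)"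
proof -
  assume n: "n \<ge> 1"
  have "{1..n} = insert 1 {2..n}" using n by auto
  thus ?thesis by (simp add: sqd_def)
qed

lemma q_dep: "t > 0 \<Longrightarrow> n \<ge> 1 \<Longrightarrow>
   (\<Sum>y\<in>{1..<Suc n}. hoppe_parent_prob t (Suc n) y * dep p y) = hipl p n / (t + real n - 1)"
  using q_sum_gen[of t n "\<lambda>y. dep p y"] by (simp add: ipl_alt)

lemma q_dep2: "t > 0 \<Longrightarrow> n \<ge> 1 \<Longrightarrow>
   (\<Sum>y\<in>{1..<Suc n}. hoppe_parent_prob t (Suc n) y * (dep p y)^2) = sqd p n / (t + real n - 1)"
  using q_sum_gen[of t n "\<lambda>y. (dep p y)^2"] by (simp add: sqd_alt)

lemma Ex_cong: "(\<And>v. v \<in> hS n \<Longrightarrow> F v = G v) \<Longrightarrow> hEx t n F = hEx t n G"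
  unfolding hEx_def by (auto intro!: sum.cong)
lemma Ex_add: "hEx t n (\<lambda>p. F p + G p) = hEx t n F + hEx t n G"
  unfolding hEx_def by (simp add: sum.distrib algebra_simps)
lemma Ex_diff: "hEx t n (\<lambda>p. F p - G p) = hEx t n F - hEx t n G"
  unfolding hEx_def by (simp add: sum_subtractf algebra_simps)
lemma Ex_cmult: "hEx t n (\<lambda>p. c * F p) = c * hEx t n F"
  unfolding hEx_def sum_distrib_left by (simp add: mult.assoc)
lemma Ex_multc: "hEx t n (\<lambda>p. F p * c) = hEx t n F * c"
  unfolding hEx_def sum_distrib_right by (rule sum.cong) (simp_all add: mult_ac)

lemma q_sum': "t > 0 \<Longrightarrow> n \<ge> 1 \<Longrightarrow> (\<Sum>y\<in>{Suc 0..<Suc n}. hoppe_parent_prob t (Suc n) y) = 1"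
  using q_sum by simp

lemma Ex_local: "t > 0 \<Longrightarrow> n \<ge> 1 \<Longrightarrow> locn n F \<Longrightarrow> hEx t (Suc n) F = hEx t n F"
  by (simp add: Ex_Suc locn_upd sum_distrib_right[symmetric] q_sum q_sum')

lemma Ex_const: assumes "t > 0" "n \<ge> 1" shows "hEx t n (\<lambda>_. c) = c"
  using assms(2)
proof (induction n)
  case (Suc n)
  show ?case
  proof (cases "n = 0")
    case True thus ?thesis by (simp add: hEx_def hS_def hw_def)
  next
    case False
    thus ?thesis using Ex_local[of t n "\<lambda>_. c"] assms(1) Suc by (simp add: locn_def)
  qed
qed simp

lemma Ex_step: "t > 0 \<Longrightarrow> n \<ge> 1 \<Longrightarrow> locn n f \<Longrightarrow>
  hEx t (Suc n) (\<lambda>p. f p * g (dep p (Suc n))) =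
  hEx t n (\<lambda>p. f p * (\<Sum>y\<in>{1..<Suc n}. hoppe_parent_prob t (Suc n) y * g (1 + dep p y)))"
  unfolding Ex_Suc by (rule Ex_cong) (auto simp: locn_upd dep_upd_top sum_distrib_left mult_ac intro!: sum.cong)



lemma qsum_lin: "t > 0 \<Longrightarrow> n \<ge> 1 \<Longrightarrow>
  (\<Sum>y\<in>{1..<Suc n}. hoppe_parent_prob t (Suc n) y * (1 + dep p y)) = 1 + hipl p n / (t + real n - 1)"
  unfolding distrib_left sum.distrib mult_1_right q_sum q_dep by simp

lemma qsum_sq: "t > 0 \<Longrightarrow> n \<ge> 1 \<Longrightarrow>
  (\<Sum>y\<in>{1..<Suc n}. hoppe_parent_prob t (Suc n) y * (1 + dep p y)^2)
     = 1 + 2 * (hipl p n / (t + real n - 1)) + sqd p n / (t + real n - 1)"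
proof -
  assume t: "t > 0" and n: "n \<ge> 1"
  have e: "\<And>d::real. (1 + d)^2 = 1 + 2 * d + d^2" by (simp add: power2_eq_square algebra_simps)
  show ?thesis
    unfolding e distrib_left sum.distrib mult_1_right q_sum[OF t n] mult.left_commute[of _ 2]
      sum_distrib_left[symmetric] q_dep[OF t n] q_dep2[OF t n] by simp
qed

lemma Ex_ipl_Suc:
  assumes t: "t > 0" and n: "n \<ge> 1" and f: "locn n f"
  shows "hEx t (Suc n) (\<lambda>p. f p * hipl p (Suc n))
     = ((t + real n)/(t + real n - 1)) * hEx t n (\<lambda>p. f p * hipl p n) + hEx t n f"
proof -
  have a: "t + real n - 1 > 0" using t n by simp
  have lf: "locn n (\<lambda>p. f p * hipl p n)" using f locn_ipl[of n] unfolding locn_def by metis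
  have "hEx t (Suc n) (\<lambda>p. f p * hipl p (Suc n)) = hEx t (Suc n) (\<lambda>p. f p * hipl p n) + hEx t (Suc n) (\<lambda>p. f p * (\<lambda>x. x) (dep p (Suc n)))"
    unfolding ipl_Suc distrib_left Ex_add by simp
  also have "\<dots> = hEx t n (\<lambda>p. f p * hipl p n) + hEx t n (\<lambda>p. f p + (1 / (t + real n - 1)) * (f p * hipl p n))"
  proof -
    have "hEx t (Suc n) (\<lambda>p. f p * dep p (Suc n)) = hEx t n (\<lambda>p. f p * (1 + hipl p n / (t + real n - 1)))"
      using Ex_step[OF t n f, of "\<lambda>x. x"] qsum_lin[OF t n] by simp
    thus ?thesis unfolding Ex_local[OF t n lf] by (simp add: algebra_simps)
  qed
  also have "\<dots> = ((t + real n)/(t + real n - 1)) * hEx t n (\<lambda>p. f p * hipl p n) + hEx t n f"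
    unfolding Ex_add Ex_cmult using a by (simp add: field_simps)
  finally show ?thesis .
qed

lemma Ex_e: assumes t: "t > 0" and n: "n \<ge> 1"
  shows "hEx t n (\<lambda>p. hipl p n) = (t + real n - 1) * hH t n"
  using n
proof (induction n)
  case (Suc n)
  show ?case
  proof (cases "n = 0")
    case True thus ?thesis by (simp add: hEx_def hS_def hw_def hipl_def)
  next
    case False
    hence n: "n \<ge> 1" by simp
    have a: "t + real n - 1 > 0" "t + real n > 0" using t n by auto
    have "hEx t (Suc n) (\<lambda>p. hipl p (Suc n)) = hEx t (Suc n) (\<lambda>p. 1 * hipl p (Suc n))" by simp
    also have "\<dots> = (t + real n) * hH t n + 1"
    proof -
      have l1: "locn n (\<lambda>_. 1::real)" by (simp add: locn_def)
      show ?thesis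
        unfolding Ex_ipl_Suc[OF t n l1] using Suc.IH[OF n] Ex_const[OF t n] a by simp
    qed
    also have "\<dots> = (t + real (Suc n) - 1) * hH t (Suc n)"
      using a by (simp add: hH_Suc[OF n] field_simps)
    finally show ?thesis .
  qed
qed simp

lemma Ex_Q: assumes t: "t > 0" and n: "n \<ge> 1"
  shows "hEx t n (\<lambda>p. sqd p n) = (t + real n - 1) * hR t n"
  using n
proof (induction n)
  case (Suc n)
  show ?case
  proof (cases "n = 0")
    case True thus ?thesis by (simp add: hEx_def hS_def hw_def sqd_def)
  next
    case False
    hence n: "n \<ge> 1" by simp
    have a: "t + real n - 1 > 0" "t + real n > 0" using t n by auto
    have "hEx t (Suc n) (\<lambda>p. sqd p (Suc n)) = hEx t (Suc n) (\<lambda>p. sqd p n) + hEx t (Suc n) (\<lambda>p. 1 * (\<lambda>x. x^2) (dep p (Suc n)))"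
      unfolding sqd_Suc Ex_add by simp
    also have "\<dots> = hEx t n (\<lambda>p. sqd p n) + hEx t n (\<lambda>p. 1 + 2 * (1/(t + real n - 1)) * hipl p n + (1/(t + real n - 1)) * sqd p n)"
    proof -
      have l1: "locn n (\<lambda>_. 1::real)" by (simp add: locn_def)
      have "hEx t (Suc n) (\<lambda>p. 1 * (dep p (Suc n))^2) = hEx t n (\<lambda>p. 1 * (1 + 2 * (hipl p n / (t + real n - 1)) + sqd p n / (t + real n - 1)))"
        using Ex_step[OF t n l1, of "\<lambda>x. x^2"] qsum_sq[OF t n] by simp
      thus ?thesis unfolding Ex_local[OF t n locn_sqd] by (simp add: algebra_simps)
    qed
    also have "\<dots> = (t + real n - 1) * hR t n + 1 + 2 * hH t n + hR t n"
      unfolding Ex_add Ex_cmult Ex_const[OF t n] Suc.IH[OF n] Ex_e[OF t n] using a by simp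
    also have "\<dots> = (t + real (Suc n) - 1) * hR t (Suc n)"
      using a by (simp add: hR_Suc[OF n] field_simps)
    finally show ?thesis .
  qed
qed simp

lemma alg_s: "(a::real) > 0 \<Longrightarrow> R = H^2 + H - G \<Longrightarrow>
  (a*(a+1)*T + (a*H)^2) + 2*(a*H + (a*(a+1)*T + (a*H)^2)/a) + 1 + 2*(a*H)/a + (a*R)/a
   = (a+1)*(a+2)*(T + (H-G)/((a+1)*(a+2))) + ((a+1)*(H + 1/(a+1)))^2"
proof -
  assume a: "a > 0" and R: "R = H^2 + H - G"
  have nz: "a \<noteq> 0" "a + 1 \<noteq> 0" "(a+1)*(a+2) \<noteq> 0" using a by auto
  have d1: "(a*H)/a = H" "(a*R)/a = R" "(a*(a+1)*T + (a*H)^2)/a = (a+1)*T + a*H^2"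
    using nz by (simp_all add: field_simps power2_eq_square)
  have d2: "(a+1)*(a+2)*(T + (H-G)/((a+1)*(a+2))) = (a+1)*(a+2)*T + (H - G)"
    using nz by (simp add: distrib_left)
  have d3: "(a+1)*(H + 1/(a+1)) = (a+1)*H + 1" using nz by (simp add: distrib_left)
  have d4: "2*(a*H)/a = 2*H" using nz by simp
  show ?thesis unfolding d1 d2 d3 d4 by (simp add: R power2_eq_square algebra_simps)
qed

lemma Ex_s: assumes t: "t > 0" and n: "n \<ge> 1"
  shows "hEx t n (\<lambda>p. (hipl p n)^2) = (t + real n - 1) * (t + real n) * hT t n + ((t + real n - 1) * hH t n)^2"
  using n
proof (induction n)
  case (Suc n)
  show ?case
  proof (cases "n = 0")
    case True thus ?thesis by (simp add: hEx_def hS_def hw_def hipl_def)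
  next
    case False
    hence n: "n \<ge> 1" by simp
    define a where "a = t + real n - 1"
    have a: "a > 0" using t n by (simp add: a_def)
    have l1: "locn n (\<lambda>_. 1::real)" by (simp add: locn_def)
    have lsq: "locn n (\<lambda>p. (hipl p n)^2)" using locn_ipl[of n] unfolding locn_def by metis
    have t2: "hEx t (Suc n) (\<lambda>p. hipl p n * dep p (Suc n)) = hEx t n (\<lambda>p. hipl p n * (1 + hipl p n / a))"
      using Ex_step[OF t n locn_ipl, of "\<lambda>x. x"] qsum_lin[OF t n] by (simp add: a_def)
    have t3: "hEx t (Suc n) (\<lambda>p. 1 * (dep p (Suc n))^2) = hEx t n (\<lambda>p. 1 * (1 + 2 * (hipl p n / a) + sqd p n / a))"
      using Ex_step[OF t n l1, of "\<lambda>x. x^2"] qsum_sq[OF t n] by (simp add: a_def)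
    have t3': "hEx t (Suc n) (\<lambda>p. (dep p (Suc n))^2) = hEx t n (\<lambda>p. 1 + 2 * (hipl p n / a) + sqd p n / a)"
      using t3 by simp
    have "hEx t (Suc n) (\<lambda>p. (hipl p (Suc n))^2) = hEx t (Suc n) (\<lambda>p. (hipl p n)^2 + 2 * (hipl p n * dep p (Suc n)) + (dep p (Suc n))^2)"
      unfolding ipl_Suc by (simp add: power2_eq_square algebra_simps)
    also have "\<dots> = hEx t n (\<lambda>p. (hipl p n)^2) + 2 * hEx t n (\<lambda>p. hipl p n * (1 + hipl p n / a)) + hEx t n (\<lambda>p. 1 * (1 + 2 * (hipl p n / a) + sqd p n / a))"
      by (simp only: Ex_add Ex_cmult t2 t3' Ex_local[OF t n lsq] mult_1_left)
    also have "\<dots> = hEx t n (\<lambda>p. (hipl p n)^2) + 2 * (hEx t n (\<lambda>p. hipl p n) + hEx t n (\<lambda>p. (hipl p n)^2) / a) + 1 + 2 * (hEx t n (\<lambda>p. hipl p n) / a) + hEx t n (\<lambda>p. sqd p n) / a"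
    proof -
      have e1: "(\<lambda>p. hipl p n * (1 + hipl p n / a)) = (\<lambda>p. hipl p n + (1/a) * (hipl p n)^2)"
        by (auto simp: power2_eq_square field_simps)
      have e2: "(\<lambda>p. 1 * (1 + 2 * (hipl p n / a) + sqd p n / a)) = (\<lambda>p. 1 + (2/a) * hipl p n + (1/a) * sqd p n)"
        by auto
      show ?thesis unfolding e1 e2 Ex_add Ex_cmult Ex_const[OF t n] by (simp add: divide_inverse algebra_simps)
    qed
    also have "\<dots> = (a*(a+1)*hT t n + (a*hH t n)^2) + 2*(a*hH t n + (a*(a+1)*hT t n + (a*hH t n)^2)/a) + 1 + 2*(a*hH t n)/a + (a*hR t n)/a"
      unfolding Suc.IH[OF n] Ex_e[OF t n] Ex_Q[OF t n] by (simp add: a_def)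
    also have "\<dots> = (a+1)*(a+2)*(hT t n + (hH t n - hG t n)/((a+1)*(a+2))) + ((a+1)*(hH t n + 1/(a+1)))^2"
      by (rule alg_s[OF a]) (use hR_eq[OF t, of n] in simp)
    also have "\<dots> = (t + real (Suc n) - 1) * (t + real (Suc n)) * hT t (Suc n) + ((t + real (Suc n) - 1) * hH t (Suc n))^2"
      unfolding hT_Suc[OF n] hH_Suc[OF n] by (simp add: a_def add_ac)
    finally show ?thesis .
  qed
qed simp

lemma Ex_var: assumes t: "t > 0" and n: "n \<ge> 1"
  shows "hEx t n (\<lambda>p. (hipl p n - (t + real n - 1) * hH t n)^2) = (t + real n - 1) * (t + real n) * hT t n"
proof -
  define E where "E = (t + real n - 1) * hH t n"
  have "(\<lambda>p. (hipl p n - E)^2) = (\<lambda>p. (hipl p n)^2 - (2*E) * hipl p n + E^2)"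
    by (auto simp: power2_eq_square algebra_simps)
  hence "hEx t n (\<lambda>p. (hipl p n - E)^2) = hEx t n (\<lambda>p. (hipl p n)^2) - 2*E*E + E^2"
    by (simp only: Ex_add Ex_diff Ex_cmult Ex_const[OF t n] Ex_e[OF t n] E_def)
  thus ?thesis unfolding Ex_s[OF t n] E_def by (simp add: power2_eq_square)
qed

lemma Ex_mart: assumes t: "t > 0" and n: "n \<ge> 1" and f: "locn n f"
  shows "hEx t (Suc n) (\<lambda>p. f p * ((hipl p (Suc n) - (t + real (Suc n) - 1) * hH t (Suc n)) / (t + real (Suc n) - 1)))
       = hEx t n (\<lambda>p. f p * ((hipl p n - (t + real n - 1) * hH t n) / (t + real n - 1)))"
proof -
  define a where "a = t + real n - 1"
  have a: "a > 0" using t n by (simp add: a_def)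
  define X where "X = hEx t n (\<lambda>p. f p * hipl p n)"
  define Y where "Y = hEx t n f"
  define H where "H = hH t n"
  have a1: "t + real (Suc n) - 1 = a + 1" by (simp add: a_def)
  have H1: "hH t (Suc n) = H + 1/(a+1)" by (simp add: hH_Suc[OF n] H_def a_def add_ac)
  have fl: "\<And>E c. (\<lambda>p. f p * ((hipl p (Suc n) - E) / c)) = (\<lambda>p. (1/c) * (f p * hipl p (Suc n)) - (E/c) * f p)"
    by (simp add: divide_inverse algebra_simps)
  have fl2: "\<And>E c. (\<lambda>p. f p * ((hipl p n - E) / c)) = (\<lambda>p. (1/c) * (f p * hipl p n) - (E/c) * f p)"
    by (simp add: divide_inverse algebra_simps)
  have "hEx t (Suc n) (\<lambda>p. f p * ((hipl p (Suc n) - (t + real (Suc n) - 1) * hH t (Suc n)) / (t + real (Suc n) - 1)))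
      = (1/(a+1)) * (((a+1)/a) * X + Y) - ((a+1)*(H + 1/(a+1))/(a+1)) * Y"
    unfolding fl Ex_diff Ex_cmult Ex_ipl_Suc[OF t n f] Ex_local[OF t n f] a1 H1
    by (simp add: X_def Y_def a_def add_ac)
  also have "\<dots> = (1/a) * X - (a*H/a) * Y"
  proof -
    have nz: "a \<noteq> 0" "a + 1 \<noteq> 0" using a by auto
    have "(1/(a+1)) * (((a+1)/a) * X + Y) = X/a + Y/(a+1)" using nz by (simp add: field_simps)
    moreover have "((a+1)*(H + 1/(a+1))/(a+1)) * Y = H*Y + Y/(a+1)"
    proof -
      have "(a+1)*(H + 1/(a+1))/(a+1) = H + 1/(a+1)" using nz(2) by (rule nonzero_mult_div_cancel_left)
      thus ?thesis by (simp add: algebra_simps)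
    qed
    moreover have "(1/a) * X - (a*H/a) * Y = X/a - H*Y" using nz by simp
    ultimately show ?thesis using nz by simp
  qed
  also have "\<dots> = hEx t n (\<lambda>p. f p * ((hipl p n - (t + real n - 1) * hH t n) / (t + real n - 1)))"
    unfolding fl2 Ex_diff Ex_cmult by (simp add: X_def Y_def a_def H_def)
  finally show ?thesis .
qed



lemma meas_local:
  fixes F :: "(nat \<Rightarrow> nat) \<Rightarrow> real"
  assumes "\<And>i. i \<in> {2..n} \<Longrightarrow> P i \<in> measurable N (count_space UNIV)" and "locn n F"
  shows "(\<lambda>x. F (\<lambda>i. P i x)) \<in> borel_measurable N"
  using assms
proof (induction n arbitrary: F)
  case 0
  hence "\<And>x. F (\<lambda>i. P i x) = F (\<lambda>_. 0)" unfolding locn_def by auto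
  thus ?case by simp
next
  case (Suc n)
  show ?case
  proof (cases "n = 0")
    case True
    hence "\<And>x. F (\<lambda>i. P i x) = F (\<lambda>_. 0)" using Suc.prems(2) unfolding locn_def by auto
    thus ?thesis by simp
  next
    case False
    have mP: "P (Suc n) \<in> measurable N (count_space UNIV)" using False by (intro Suc.prems(1)) auto
    have "(\<lambda>x. (\<lambda>j x. F ((\<lambda>i. P i x)(Suc n := j))) (P (Suc n) x) x) \<in> borel_measurable N"
    proof (rule measurable_compose_countable[OF _ mP])
      fix j :: nat
      have l: "locn n (\<lambda>p. F (p(Suc n := j)))"
        using Suc.prems(2) unfolding locn_def by (metis atLeastAtMost_iff fun_upd_apply le_SucE)
      show "(\<lambda>x. F ((\<lambda>i. P i x)(Suc n := j))) \<in> borel_measurable N"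
        using Suc.IH[OF _ l] Suc.prems(1) by (auto simp: fun_upd_def)
    qed
    moreover have "\<And>x. (\<lambda>i. P i x)(Suc n := P (Suc n) x) = (\<lambda>i. P i x)" by (rule ext) simp
    ultimately show ?thesis by simp
  qed
qed

locale hoppe_setup = prob_space M for M :: "'a measure" +
  fixes t :: real and P :: "nat \<Rightarrow> 'a \<Rightarrow> nat"
  assumes t_pos: "t > 0"
  and meas[measurable]: "\<And>i. P i \<in> measurable M (count_space UNIV)"
  and indep: "indep_vars (\<lambda>_. count_space UNIV) P {2..}"
  and distr: "\<And>i j. i \<ge> 2 \<Longrightarrow> measure M {x \<in> space M. P i x = j} = hoppe_parent_prob t i j"
begin

definition EV :: "nat \<Rightarrow> (nat \<Rightarrow> nat) \<Rightarrow> 'a set" where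
  "EV n v = {x \<in> space M. \<forall>i\<in>{2..n}. P i x = v i}"

lemma EV_sets[measurable]: "EV n v \<in> sets M"
  unfolding EV_def by measurable

lemma prob_EV: "prob (EV n v) = hw t n v"
proof (cases "n < 2")
  case True
  hence "EV n v = space M" "{2..n} = {}" by (auto simp: EV_def)
  thus ?thesis by (simp add: hw_def prob_space)
next
  case False
  have e: "EV n v = (\<Inter>i\<in>{2..n}. P i -` {v i} \<inter> space M)" using False by (auto simp: EV_def)
  have "prob (\<Inter>i\<in>{2..n}. P i -` {v i} \<inter> space M) = (\<Prod>i\<in>{2..n}. prob (P i -` {v i} \<inter> space M))"
    by (rule indep_varsD[OF indep]) (use False in auto)
  hence "prob (EV n v) = (\<Prod>i\<in>{2..n}. prob (P i -` {v i} \<inter> space M))"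
    unfolding e .
  also have "\<dots> = (\<Prod>i\<in>{2..n}. hoppe_parent_prob t i (v i))"
  proof (rule prod.cong)
    fix i assume i: "i \<in> {2..n}"
    have "P i -` {v i} \<inter> space M = {x \<in> space M. P i x = v i}" by auto
    thus "prob (P i -` {v i} \<inter> space M) = hoppe_parent_prob t i (v i)" using i distr by simp
  qed simp
  finally show ?thesis by (simp add: hw_def)
qed

lemma AE_support: "AE x in M. \<forall>i\<in>{2..n}. P i x \<in> {1..<i}"
proof -
  have "AE x in M. P i x \<in> {1..<i}" if i: "i \<in> {2..n}" for i
  proof -
    obtain m where m: "i = Suc m" "m \<ge> 1" using i by (cases i) auto
    have e: "{x \<in> space M. P i x \<in> {1..<i}} = (\<Union>j\<in>{1..<i}. {x \<in> space M. P i x = j})" by auto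
    have "prob (\<Union>j\<in>{1..<i}. {x \<in> space M. P i x = j}) = (\<Sum>j\<in>{1..<i}. prob {x \<in> space M. P i x = j})"
      by (rule finite_measure_finite_Union) (auto simp: disjoint_family_on_def)
    hence "prob {x \<in> space M. P i x \<in> {1..<i}} = (\<Sum>j\<in>{1..<i}. prob {x \<in> space M. P i x = j})"
      unfolding e .
    also have "\<dots> = (\<Sum>j\<in>{1..<i}. hoppe_parent_prob t i j)"
      using i distr by simp
    also have "\<dots> = 1" using q_sum[OF t_pos m(2)] m(1) by simp
    finally show ?thesis by (subst prob_Collect_eq_1[symmetric]) auto
  qed
  thus ?thesis by (subst AE_finite_all) auto
qed

lemma finite_hS: "finite (hS n)" unfolding hS_def by (intro finite_PiE) auto

lemma FS_AE:
  fixes F :: "(nat \<Rightarrow> nat) \<Rightarrow> real"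
  assumes F: "locn n F"
  shows "AE x in M. F (\<lambda>i. P i x) = (\<Sum>v\<in>hS n. indicator (EV n v) x * F v)"
  using AE_support[of n] AE_space
proof eventually_elim
  case (elim x)
  define r where "r = restrict (\<lambda>i. P i x) {2..n}"
  have r: "r \<in> hS n" using elim by (auto simp: hS_def r_def)
  have iff: "x \<in> EV n v \<longleftrightarrow> v = r" if v: "v \<in> hS n" for v
  proof
    assume "x \<in> EV n v"
    hence "\<forall>i\<in>{2..n}. P i x = v i" by (simp add: EV_def)
    thus "v = r" using v unfolding hS_def r_def by (auto simp: fun_eq_iff PiE_def extensional_def)
  next
    assume "v = r" thus "x \<in> EV n v" using elim by (simp add: EV_def r_def)
  qed
  have "(\<Sum>v\<in>hS n. indicator (EV n v) x * F v) = (\<Sum>v\<in>hS n. if v = r then F v else 0)"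
    by (rule sum.cong) (auto simp: iff indicator_def)
  also have "\<dots> = F r" using r by (simp add: sum.delta[OF finite_hS])
  also have "\<dots> = F (\<lambda>i. P i x)" using F unfolding locn_def r_def by auto
  finally show ?case by simp
qed

lemma FS:
  fixes F :: "(nat \<Rightarrow> nat) \<Rightarrow> real"
  assumes F: "locn n F"
  shows "integrable M (\<lambda>x. F (\<lambda>i. P i x))" "expectation (\<lambda>x. F (\<lambda>i. P i x)) = hEx t n F"
proof -
  have m1: "(\<lambda>x. F (\<lambda>i. P i x)) \<in> borel_measurable M" by (rule meas_local[OF _ F]) simp
  have m2: "(\<lambda>x. \<Sum>v\<in>hS n. indicator (EV n v) x * F v) \<in> borel_measurable M" by measurable
  have int2: "integrable M (\<lambda>x. \<Sum>v\<in>hS n. indicator (EV n v) x * F v)"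
    by (rule Bochner_Integration.integrable_sum, rule integrable_mult_left, rule integrable_real_indicator) (auto simp: EV_sets less_top[symmetric])
  show "integrable M (\<lambda>x. F (\<lambda>i. P i x))"
    using int2 integrable_cong_AE[OF m1 m2 FS_AE[OF F]] by simp
  have "expectation (\<lambda>x. F (\<lambda>i. P i x)) = expectation (\<lambda>x. \<Sum>v\<in>hS n. indicator (EV n v) x * F v)"
    by (rule integral_cong_AE[OF m1 m2 FS_AE[OF F]])
  also have "\<dots> = (\<Sum>v\<in>hS n. expectation (\<lambda>x. indicator (EV n v) x * F v))"
    by (rule Bochner_Integration.integral_sum, rule integrable_mult_left, rule integrable_real_indicator) (auto simp: EV_sets less_top[symmetric])
  also have "\<dots> = (\<Sum>v\<in>hS n. F v * hw t n v)"
  proof (rule sum.cong)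
    fix v
    have "EV n v \<inter> space M = EV n v" by (auto simp: EV_def)
    thus "expectation (\<lambda>x. indicator (EV n v) x * F v) = F v * hw t n v"
      by (simp add: prob_EV)
  qed simp
  finally show "expectation (\<lambda>x. F (\<lambda>i. P i x)) = hEx t n F" by (simp add: hEx_def)
qed

abbreviation "filt n \<equiv> hoppe_filtration M P n"

lemma gen_sub: "{P i -` A \<inter> space M | i A. 2 \<le> i \<and> i \<le> n} \<subseteq> Pow (space M)" by auto

lemma sets_filt: "sets (filt n) = sigma_sets (space M) {P i -` A \<inter> space M | i A. 2 \<le> i \<and> i \<le> n}"
  unfolding hoppe_filtration_def by (rule sets_measure_of[OF gen_sub])

lemma space_filt: "space (filt n) = space M"
  unfolding hoppe_filtration_def by (rule space_measure_of[OF gen_sub])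

lemma subalg: "subalgebra M (filt n)"
proof -
  have "{P i -` A \<inter> space M | i A. 2 \<le> i \<and> i \<le> n} \<subseteq> sets M"
  proof
    fix x assume "x \<in> {P i -` A \<inter> space M | i A. 2 \<le> i \<and> i \<le> n}"
    then obtain i A where "x = P i -` A \<inter> space M" by blast
    thus "x \<in> sets M" using measurable_sets[OF meas[of i], of A] by simp
  qed
  hence "sigma_sets (space M) {P i -` A \<inter> space M | i A. 2 \<le> i \<and> i \<le> n} \<subseteq> sets M"
    by (rule sets.sigma_sets_subset)
  thus ?thesis unfolding subalgebra_def space_filt sets_filt by simp
qed

lemma filt_mono: assumes nm: "n \<le> m" shows "sets (filt n) \<subseteq> sets (filt m)"
  unfolding sets_filt
proof (rule sigma_sets_subseteq, rule subsetI)
  fix x assume "x \<in> {P i -` A \<inter> space M | i A. 2 \<le> i \<and> i \<le> n}"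
  then obtain i A where x: "x = P i -` A \<inter> space M" "2 \<le> i" "i \<le> n" by blast
  have "i \<le> m" using x(3) nm by simp
  thus "x \<in> {P i -` A \<inter> space M | i A. 2 \<le> i \<and> i \<le> m}" using x(1,2) by blast
qed

lemma P_meas_filt: "i \<in> {2..n} \<Longrightarrow> P i \<in> measurable (filt n) (count_space UNIV)"
  by (rule measurableI) (auto simp: space_filt sets_filt intro!: sigma_sets.Basic)

definition RR :: "nat \<Rightarrow> 'a \<Rightarrow> nat \<Rightarrow> nat" where "RR n x = restrict (\<lambda>i. P i x) {2..n}"

lemma filt_saturated:
  assumes "A \<in> sets (filt n)"
  shows "\<exists>T. \<forall>x\<in>space M. x \<in> A \<longleftrightarrow> RR n x \<in> T"
  using assms unfolding sets_filt
proof (induction rule: sigma_sets.induct)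
  case (Basic a)
  then obtain i B where a: "a = P i -` B \<inter> space M" "2 \<le> i" "i \<le> n" by auto
  show ?case by (rule exI[of _ "{r. r i \<in> B}"]) (use a in \<open>auto simp: RR_def\<close>)
next
  case Empty
  show ?case by (rule exI[of _ "{}"]) auto
next
  case (Compl a)
  then obtain T where T: "\<forall>x\<in>space M. x \<in> a \<longleftrightarrow> RR n x \<in> T" by blast
  show ?case
  proof (intro exI[of _ "- T"] ballI)
    fix x assume x: "x \<in> space M"
    thus "x \<in> space M - a \<longleftrightarrow> RR n x \<in> - T" using T by simp
  qed
next
  case (Union a)
  then obtain T where T: "\<And>k. \<forall>x\<in>space M. x \<in> a k \<longleftrightarrow> RR n x \<in> T k" by metis
  show ?case
  proof (intro exI[of _ "\<Union>k. T k"] ballI)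
    fix x assume x: "x \<in> space M"
    have "x \<in> \<Union>(range a) \<longleftrightarrow> (\<exists>k. x \<in> a k)" by blast
    also have "\<dots> \<longleftrightarrow> (\<exists>k. RR n x \<in> T k)" using T x by simp
    also have "\<dots> \<longleftrightarrow> RR n x \<in> (\<Union>k. T k)" by blast
    finally show "x \<in> \<Union>(range a) \<longleftrightarrow> RR n x \<in> (\<Union>k. T k)" .
  qed
qed

end



definition Xf :: "real \<Rightarrow> nat \<Rightarrow> (nat \<Rightarrow> nat) \<Rightarrow> real" where
  "Xf t n p = (hipl p n - (t + real n - 1) * hH t n) / (t + real n - 1)"

lemma locn_Xf: "locn n (Xf t n)"
  using locn_ipl[of n] unfolding locn_def Xf_def by metis

lemma locn_mult: assumes f: "locn n f" and g: "locn n g" shows "locn n (\<lambda>p. f p * g p :: real)"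
  unfolding locn_def
proof (intro allI impI)
  fix p p' :: "nat \<Rightarrow> nat" assume h: "\<forall>k\<in>{2..n}. p k = p' k"
  have "f p = f p'" using f h unfolding locn_def by blast
  moreover have "g p = g p'" using g h unfolding locn_def by blast
  ultimately show "f p * g p = f p' * g p'" by simp
qed

lemma hipl_0[simp]: "hipl p 0 = 0" by (simp add: hipl_def)

theorem theorem2p6:
  fixes M :: "'a measure" and theta :: real and P :: "nat \<Rightarrow> 'a \<Rightarrow> nat"
  assumes M: "prob_space M"
    and theta_pos: "theta > 0"
    and meas: "\<And>i. P i \<in> measurable M (count_space UNIV)"
    and indep: "prob_space.indep_vars M (\<lambda>_. count_space UNIV) P {2..}"
    and distr: "\<And>i j. i \<ge> 2 \<Longrightarrow>
                  measure M {x \<in> space M. P i x = j} = hoppe_parent_prob theta i j"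
  defines "I \<equiv> (\<lambda>n x. real (hoppe_ipl (\<lambda>i. P i x) n))"
  shows "(\<forall>n\<ge>1. prob_space.expectation M (I n)
                   = (theta + real n - 1) * (\<Sum>i=1..n-1. 1 / (theta + real i)))
     \<and> (\<lambda>n. prob_space.expectation M (I n)
              - (real n * ln (real n) - Digamma (theta + 1) * real n)) \<in> o(\<lambda>n. real n)
     \<and> (\<lambda>n. prob_space.variance M (I n)
              - (2 / (theta + 1) - Polygamma 1 (theta + 1)) * (real n)^2) \<in> o(\<lambda>n. (real n)^2)
     \<and> real_martingale_from 1 M (hoppe_filtration M P)
         (\<lambda>n x. (I n x - prob_space.expectation M (I n)) / (theta + real n - 1))
     \<and> (\<forall>n\<ge>1. prob_space.expectation M
         (\<lambda>x. (I n x - prob_space.expectation M (I n)) / (theta + real n - 1)) = 0)"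
proof -
  have hs: "hoppe_setup M theta P"
    unfolding hoppe_setup_def hoppe_setup_axioms_def using M theta_pos meas indep distr by auto
  interpret hoppe_setup M theta P by (rule hs)
  have Ieq: "I n = (\<lambda>x. hipl (\<lambda>i. P i x) n)" for n
    by (rule ext) (simp add: I_def hoppe_ipl_def hipl_def dep_def)
  have EI: "expectation (I n) = (theta + real n - 1) * hH theta n" for n
  proof (cases "n = 0")
    case True thus ?thesis by (simp add: Ieq)
  next
    case False
    thus ?thesis unfolding Ieq FS(2)[OF locn_ipl] using Ex_e[OF theta_pos] by simp
  qed
  have VI: "variance (I n) = (theta + real n - 1) * (theta + real n) * hT theta n" for n
  proof (cases "n = 0")
    case True thus ?thesis by (simp add: Ieq)
  next
    case False
    have l: "locn n (\<lambda>p. (hipl p n - (theta + real n - 1) * hH theta n)^2)"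
      using locn_ipl[of n] unfolding locn_def by metis
    show ?thesis unfolding EI unfolding Ieq FS(2)[OF l] using Ex_var[OF theta_pos] False by simp
  qed
  have Xeq: "(\<lambda>x. (I n x - expectation (I n)) / (theta + real n - 1)) = (\<lambda>x. Xf theta n (\<lambda>i. P i x))" for n
    unfolding EI by (simp add: Ieq Xf_def)
  have p1: "\<forall>n\<ge>1. expectation (I n) = (theta + real n - 1) * (\<Sum>i=1..n-1. 1 / (theta + real i))"
  proof (intro allI impI)
    fix n :: nat assume n: "n \<ge> 1"
    then obtain m where m: "n = Suc m" by (cases n) auto
    show "expectation (I n) = (theta + real n - 1) * (\<Sum>i=1..n-1. 1 / (theta + real i))"
      unfolding EI hH_def m by (simp add: atLeastLessThanSuc_atLeastAtMost)
  qed
  have p2: "(\<lambda>n. expectation (I n) - (real n * ln (real n) - Digamma (theta + 1) * real n)) \<in> o(\<lambda>n. real n)"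
    unfolding EI by (rule asym1[OF theta_pos])
  have p3: "(\<lambda>n. variance (I n) - (2 / (theta + 1) - Polygamma 1 (theta + 1)) * (real n)^2) \<in> o(\<lambda>n. (real n)^2)"
    unfolding VI by (rule asym2[OF theta_pos])
  have p5: "\<forall>n\<ge>1. expectation (\<lambda>x. (I n x - expectation (I n)) / (theta + real n - 1)) = 0"
  proof (intro allI impI)
    fix n :: nat assume n: "n \<ge> 1"
    have "(\<lambda>p. Xf theta n p) = (\<lambda>p. (1/(theta + real n - 1)) * hipl p n - ((theta + real n - 1) * hH theta n / (theta + real n - 1)) * 1)"
      by (auto simp: Xf_def diff_divide_distrib)
    hence "hEx theta n (Xf theta n) = (1/(theta + real n - 1)) * hEx theta n (\<lambda>p. hipl p n) - ((theta + real n - 1) * hH theta n / (theta + real n - 1)) * 1"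
      by (simp only: Ex_diff Ex_cmult Ex_const[OF theta_pos n])
    moreover have "theta + real n - 1 \<noteq> 0" using theta_pos n by simp
    ultimately have "hEx theta n (Xf theta n) = 0"
      using Ex_e[OF theta_pos n] by simp
    thus "expectation (\<lambda>x. (I n x - expectation (I n)) / (theta + real n - 1)) = 0"
      unfolding Xeq FS(2)[OF locn_Xf] .
  qed
  have mstep: "AE x in M. real_cond_exp M (filt n) (\<lambda>x. Xf theta (Suc n) (\<lambda>i. P i x)) x = Xf theta n (\<lambda>i. P i x)"
    if n: "n \<ge> 1" for n
  proof -
    have "sigma_finite_subalgebra M (filt n)"
      by (rule finite_measure_subalgebra_is_sigma_finite)
         (simp add: finite_measure_subalgebra_def finite_measure_subalgebra_axioms_def subalg finite_measure_axioms)
    then interpret S: sigma_finite_subalgebra M "filt n" .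
    show ?thesis
    proof (rule S.real_cond_exp_charact)
      show "integrable M (\<lambda>x. Xf theta (Suc n) (\<lambda>i. P i x))" by (rule FS(1)[OF locn_Xf])
      show "integrable M (\<lambda>x. Xf theta n (\<lambda>i. P i x))" by (rule FS(1)[OF locn_Xf])
      show "(\<lambda>x. Xf theta n (\<lambda>i. P i x)) \<in> borel_measurable (filt n)"
        by (rule meas_local[OF P_meas_filt locn_Xf])
      fix A assume A: "A \<in> sets (filt n)"
      obtain T where T: "\<forall>x\<in>space M. x \<in> A \<longleftrightarrow> RR n x \<in> T" using filt_saturated[OF A] by blast
      define g where "g p = (indicator T (restrict p {2..n}) :: real)" for p
      have lg: "locn n g" unfolding locn_def g_def
      proof (intro allI impI)
        fix p p' :: "nat \<Rightarrow> nat" assume h: "\<forall>k\<in>{2..n}. p k = p' k"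
        have "restrict p {2..n} = restrict p' {2..n}"
        proof (rule restrict_ext)
          fix k assume "k \<in> {2..n}" thus "p k = p' k" using h by blast
        qed
        thus "indicator T (restrict p {2..n}) = (indicator T (restrict p' {2..n}) :: real)" by simp
      qed
      have ind: "indicator A x = g (\<lambda>i. P i x)" if x: "x \<in> space M" for x
      proof -
        have "x \<in> A \<longleftrightarrow> RR n x \<in> T" using T x by blast
        thus ?thesis unfolding g_def RR_def indicator_def by simp
      qed
      have "(\<integral>x\<in>A. Xf theta (Suc n) (\<lambda>i. P i x) \<partial>M) = expectation (\<lambda>x. (\<lambda>p. g p * Xf theta (Suc n) p) (\<lambda>i. P i x))"
        unfolding set_lebesgue_integral_def by (rule Bochner_Integration.integral_cong) (simp_all add: ind)
      also have "\<dots> = hEx theta (Suc n) (\<lambda>p. g p * Xf theta (Suc n) p)"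
      proof (rule FS(2))
        show "locn (Suc n) (\<lambda>p. g p * Xf theta (Suc n) p)"
          by (rule locn_mult[OF locn_mono[OF lg] locn_Xf]) simp
      qed
      also have "\<dots> = hEx theta n (\<lambda>p. g p * Xf theta n p)"
        unfolding Xf_def by (rule Ex_mart[OF theta_pos n lg])
      also have "\<dots> = expectation (\<lambda>x. (\<lambda>p. g p * Xf theta n p) (\<lambda>i. P i x))"
      proof (rule FS(2)[symmetric])
        show "locn n (\<lambda>p. g p * Xf theta n p)"
          by (rule locn_mult[OF lg locn_Xf])
      qed
      also have "\<dots> = (\<integral>x\<in>A. Xf theta n (\<lambda>i. P i x) \<partial>M)"
        unfolding set_lebesgue_integral_def by (rule Bochner_Integration.integral_cong) (simp_all add: ind)
      finally show "(\<integral>x\<in>A. Xf theta (Suc n) (\<lambda>i. P i x) \<partial>M) = (\<integral>x\<in>A. Xf theta n (\<lambda>i. P i x) \<partial>M)" .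
    qed
  qed
  have p4': "real_martingale_from 1 M (hoppe_filtration M P) (\<lambda>n x. Xf theta n (\<lambda>i. P i x))"
    unfolding real_martingale_from_def
  proof (intro conjI)
    show "\<forall>n\<ge>1. subalgebra M (filt n)" using subalg by blast
    show "\<forall>n m. 1 \<le> n \<and> n \<le> m \<longrightarrow> sets (filt n) \<subseteq> sets (filt m)" using filt_mono by blast
    show "\<forall>n\<ge>1. (\<lambda>x. Xf theta n (\<lambda>i. P i x)) \<in> borel_measurable (filt n)"
    proof (intro allI impI)
      fix n :: nat
      show "(\<lambda>x. Xf theta n (\<lambda>i. P i x)) \<in> borel_measurable (filt n)"
        by (rule meas_local[OF P_meas_filt locn_Xf])
    qed
    show "\<forall>n\<ge>1. integrable M (\<lambda>x. Xf theta n (\<lambda>i. P i x))" using FS(1)[OF locn_Xf] by blast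
    show "\<forall>n\<ge>1. AE x in M. real_cond_exp M (filt n) (\<lambda>x. Xf theta (Suc n) (\<lambda>i. P i x)) x = Xf theta n (\<lambda>i. P i x)"
      using mstep by blast
  qed
  have Xeq2: "(\<lambda>n x. (I n x - expectation (I n)) / (theta + real n - 1)) = (\<lambda>n x. Xf theta n (\<lambda>i. P i x))"
    using Xeq by (intro ext) metis
  have p4: "real_martingale_from 1 M (hoppe_filtration M P) (\<lambda>n x. (I n x - expectation (I n)) / (theta + real n - 1))"
    unfolding Xeq2 by (rule p4')
  show ?thesis using p1 p2 p3 p4 p5 by blast
qed


end
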